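(* Let $g:\mathds{R}^d\setminus\{0\}\to[0,\infty)$ be continuous. Then the set $\mathcal{C}_c(\mathds{R}^d,\mathcal{M}^+(\mathds{R}^d\setminus\{0\}))\cap K^g(\mathds{R}^d,\mathcal{M}^+(\mathds{R}^d\setminus\{0\}))$ is bp-dense in $K^g(\mathds{R}^d,\mathcal{M}^+(\mathds{R}^d\setminus\{0\}))$, i.e. the smallest subset of $K^g$ containing it and closed under bp-limits of sequences is all of $K^g$.
   Context: $\mathcal{M}^+(\mathds{R}^d\setminus\{0\})$ is the set of positive locally finite (Radon) measures on $\mathds{R}^d\setminus\{0\}$ with the vague topology (induced by $\mathcal{C}_c(\mathds{R}^d\setminus\{0\})$). $K^g(\mathds{R}^d,\mathcal{M}^+(\mathds{R}^d\setminus\{0\}))$ is the set of measurable maps $\mu:\mathds{R}^d\to\mathcal{M}^+(\mathds{R}^d\setminus\{0\})$ (equivalently $x\mapsto\int f\,d\mu(x)$ measurable for all $f\in\mathcal{C}_c(\mathds{R}^d\setminus\{0\})$) such that $\|\mu\|_g:=\sup_x\int g(y)\mu(x,dy)<\infty$ and $\lim_{R\to\infty}\sup_{x\in K}\mu(x,\{|y|>R\})=0$ for every compact $K\subset\mathds{R}^d$. $\mathcal{C}_c(\mathds{R}^d,\mathcal{M}^+)$ denotes vaguely continuous maps vanishing (i.e. equal to the zero measure) outside a compact set. A sequence $(\mu_n)\subset K^g$ converges boundedly and pointwise (bp) to $\mu:\mathds{R}^d\to\mathcal{M}^+$ if $\sup_n\|\mu_n\|_g<\infty$, $\mu_n(x)\to\mu(x)$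 vaguely for every $x$, and $\lim_{R\to\infty}\sup_n\sup_{x\in K}\mu_n(x,\{|y|>R\})=0$ for every compact $K$. *)

theory Defs
  imports "HOL-Analysis.Analysis"
begin

text \<open>Positive Radon (locally finite) measures on R^d minus the origin, represented as
  Borel measures on the whole space that give no mass to the origin and are finite on
  compact subsets of R^d minus the origin.\<close>
definition radon0 :: "'a::euclidean_space measure \<Rightarrow> bool" where
  "radon0 M \<longleftrightarrow> sets M = sets borel \<and> emeasure M {0} = 0 \<and>
     (\<forall>K. compact K \<and> K \<subseteq> - {0} \<longrightarrow> emeasure M K < \<infinity>)"

definition Cc0 :: "('a::euclidean_space \<Rightarrow> real) \<Rightarrow> bool" where
  "Cc0 f \<longleftrightarrow> continuous_on UNIV f \<and>
     (\<exists>K. compact K \<and> K \<subseteq> - {0} \<and> (\<forall>y. y \<notin> K \<longrightarrow> f y = 0))"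

definition vague_conv :: "(nat \<Rightarrow> 'a::euclidean_space measure) \<Rightarrow> 'a measure \<Rightarrow> bool" where
  "vague_conv Ms M \<longleftrightarrow>
     (\<forall>f. Cc0 f \<longrightarrow> (\<lambda>n. integral\<^sup>L (Ms n) f) \<longlonglongrightarrow> integral\<^sup>L M f)"

definition Kg :: "('a::euclidean_space \<Rightarrow> real) \<Rightarrow> ('a \<Rightarrow> 'a measure) set" where
  "Kg g = {\<mu>. (\<forall>x. radon0 (\<mu> x)) \<and>
     (\<forall>f. Cc0 f \<longrightarrow> (\<lambda>x. integral\<^sup>L (\<mu> x) f) \<in> borel_measurable borel) \<and>
     (SUP x. \<integral>\<^sup>+ y. ennreal (g y) \<partial>(\<mu> x)) < \<infinity> \<and>
     (\<forall>K. compact K \<longrightarrow>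
        ((\<lambda>R. SUP x\<in>K. emeasure (\<mu> x) {y. norm y > R}) \<longlongrightarrow> 0) at_top)}"

text \<open>Continuity into the
  vague topology (the initial topology of the maps M \<mapsto> integral of f, f in Cc0) means
  continuity of all compositions with these maps.\<close>
definition Cc_kernels :: "('a::euclidean_space \<Rightarrow> 'a measure) set" where
  "Cc_kernels = {\<mu>. (\<forall>x. radon0 (\<mu> x)) \<and>
     (\<forall>f. Cc0 f \<longrightarrow> continuous_on UNIV (\<lambda>x. integral\<^sup>L (\<mu> x) f)) \<and>
     (\<exists>K. compact K \<and> (\<forall>x. x \<notin> K \<longrightarrow> \<mu> x = null_measure borel))}"

definition bp_conv :: "('a::euclidean_space \<Rightarrow> real) \<Rightarrow> (nat \<Rightarrow> 'a \<Rightarrow> 'a measure) \<Rightarrow>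
    ('a \<Rightarrow> 'a measure) \<Rightarrow> bool" where
  "bp_conv g \<mu>s \<mu> \<longleftrightarrow> (\<forall>n. \<mu>s n \<in> Kg g) \<and> (\<forall>x. radon0 (\<mu> x)) \<and>
     (SUP n. SUP x. \<integral>\<^sup>+ y. ennreal (g y) \<partial>(\<mu>s n x)) < \<infinity> \<and>
     (\<forall>x. vague_conv (\<lambda>n. \<mu>s n x) (\<mu> x)) \<and>
     (\<forall>K. compact K \<longrightarrow>
        ((\<lambda>R. SUP n. SUP x\<in>K. emeasure (\<mu>s n x) {y. norm y > R}) \<longlongrightarrow> 0) at_top)"

definition bp_closed :: "('a::euclidean_space \<Rightarrow> real) \<Rightarrow> ('a \<Rightarrow> 'a measure) set \<Rightarrow> bool" where
  "bp_closed g S \<longleftrightarrow> (\<forall>\<mu>s \<mu>. (\<forall>n. \<mu>s n \<in> S) \<and> bp_conv g \<mu>s \<mu> \<and> \<mu> \<in> Kg g \<longrightarrow> \<mu> \<in> S)"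

definition bp_closure :: "('a::euclidean_space \<Rightarrow> real) \<Rightarrow> ('a \<Rightarrow> 'a measure) set \<Rightarrow>
    ('a \<Rightarrow> 'a measure) set" where
  "bp_closure g D = \<Inter>{S. S \<subseteq> Kg g \<and> D \<subseteq> S \<and> bp_closed g S}"

end

theory Submission
  imports Defs
begin


inductive baire :: "('a::metric_space \<Rightarrow> real) \<Rightarrow> bool" where
  cont: "continuous_on UNIV h \<Longrightarrow> bounded (range h) \<Longrightarrow> baire h"
| lim: "(\<And>n. baire (hs n)) \<Longrightarrow> (\<And>n x. \<bar>hs n x\<bar> \<le> M) \<Longrightarrow> (\<And>x. (\<lambda>n. hs n x) \<longlonglongrightarrow> h x) \<Longrightarrow> baire h"

lemma baire_meas: "baire h \<Longrightarrow> h \<in> borel_measurable borel"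
proof (induction rule: baire.induct)
  case (cont h) then show ?case by (simp add: borel_measurable_continuous_onI)
next
  case (lim hs M h) show ?case by (rule borel_measurable_LIMSEQ_real[where u=hs, OF lim(3) lim(4)])
qed

lemma baire_bdd: "baire h \<Longrightarrow> \<exists>M. \<forall>x. \<bar>h x\<bar> \<le> M"
proof (induction rule: baire.induct)
  case (cont h) then show ?case
    by (metis bounded_real rangeI)
next
  case (lim hs M h)
  have "\<bar>h x\<bar> \<le> M" for x
    by (rule tendsto_le[OF _ tendsto_const tendsto_rabs[OF lim(3)]]) (use lim(2) in auto)
  then show ?case by blast
qed

lemma bounded_range_iff: "bounded (range (h::'a \<Rightarrow> real)) \<longleftrightarrow> (\<exists>M. \<forall>x. \<bar>h x\<bar> \<le> M)"
  by (auto simp: bounded_real)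

lemma baire_uminus: "baire h \<Longrightarrow> baire (\<lambda>x. - h x)"
proof (induction rule: baire.induct)
  case (cont h) then show ?case
    by (intro baire.cont) (auto intro!: continuous_intros simp: bounded_range_iff)
next
  case (lim hs M h) show ?case
    by (rule baire.lim[where hs="\<lambda>n x. - hs n x" and M=M]) (use lim in \<open>auto intro: tendsto_intros\<close>)
qed

lemma baire_scale: "baire h \<Longrightarrow> baire (\<lambda>x. c * h x)"
proof (induction rule: baire.induct)
  case (cont h)
  then obtain M where "\<forall>x. \<bar>h x\<bar> \<le> M" by (auto simp: bounded_range_iff)
  then have "\<forall>x. \<bar>c * h x\<bar> \<le> \<bar>c\<bar> * M" by (simp add: abs_mult mult_left_mono)
  with cont show ?case
    by (intro baire.cont) (auto intro!: continuous_intros simp: bounded_range_iff)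
next
  case (lim hs M h) show ?case
    by (rule baire.lim[where hs="\<lambda>n x. c * hs n x" and M="\<bar>c\<bar> * M"]) 
       (use lim in \<open>auto intro: tendsto_intros simp: abs_mult mult_left_mono\<close>)
qed

lemma baire_add_cont:
  assumes "baire h" "continuous_on UNIV k" "bounded (range k)"
  shows "baire (\<lambda>x. h x + k x)"
  using assms(1)
proof (induction rule: baire.induct)
  case (cont h) with assms show ?case
    by (intro baire.cont) (auto intro!: continuous_intros bounded_plus_comp)
next
  case (lim hs M h)
  obtain K where K: "\<forall>x. \<bar>k x\<bar> \<le> K" using assms(3) by (auto simp: bounded_range_iff)
  show ?case
    by (rule baire.lim[where hs="\<lambda>n x. hs n x + k x" and M="M + K"])
       (use lim K in \<open>auto intro: tendsto_intros order_trans[OF abs_triangle_ineq add_mono]\<close>)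
qed

lemma baire_add:
  assumes "baire h" "baire k"
  shows "baire (\<lambda>x. h x + k x)"
  using assms(2)
proof (induction rule: baire.induct)
  case (cont k) then show ?case using baire_add_cont[OF assms(1)] by blast
next
  case (lim hs M k)
  obtain K where K: "\<forall>x. \<bar>h x\<bar> \<le> K" using baire_bdd[OF assms(1)] by auto
  show ?case
    by (rule baire.lim[where hs="\<lambda>n x. h x + hs n x" and M="K + M"])
       (use lim K in \<open>auto intro: tendsto_intros order_trans[OF abs_triangle_ineq add_mono]\<close>)
qed

lemma baire_sum: "finite I \<Longrightarrow> (\<And>i. i \<in> I \<Longrightarrow> baire (f i)) \<Longrightarrow> baire (\<lambda>x. \<Sum>i\<in>I. f i x)"
proof (induction I rule: finite_induct)
  case empty show ?case by (rule baire.cont) auto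
next
  case (insert i I)
  have a: "baire (f i)" using insert.prems by simp
  have b: "baire (\<lambda>x. \<Sum>i\<in>I. f i x)" using insert.IH insert.prems by simp
  from baire_add[OF a b] show ?case using insert(1,2) by simp
qed

lemma baire_open:
  assumes "open U"
  shows "baire (indicator U :: 'a::metric_space \<Rightarrow> real)"
proof (cases "U = UNIV")
  case True then show ?thesis by (auto intro!: baire.cont)
next
  case False
  define hs where "hs n x = min 1 (real n * infdist x (- U))" for n x
  show ?thesis
  proof (rule baire.lim[where hs=hs and M=1])
    fix n show "baire (hs n)" unfolding hs_def
      by (intro baire.cont) (auto intro!: continuous_intros simp: bounded_range_iff infdist_nonneg intro!: exI[of _ 1])
  next
    fix n x show "\<bar>hs n x\<bar> \<le> 1" by (auto simp: hs_def infdist_nonneg)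
  next
    fix x show "(\<lambda>n. hs n x) \<longlonglongrightarrow> indicator U x"
    proof (cases "x \<in> U")
      case True
      have "infdist x (- U) > 0" using False True assms
        by (intro infdist_pos_not_in_closed) auto
      then obtain N where N: "real N * infdist x (- U) \<ge> 1"
        by (metis real_arch_simple mult.commute pos_divide_le_eq  less_eq_real_def ) 
      have "eventually (\<lambda>n. hs n x = 1) sequentially"
      proof (rule eventually_sequentiallyI[of N])
        fix n assume "N \<le> n"
        then have "real N * infdist x (- U) \<le> real n * infdist x (- U)"
          by (intro mult_right_mono) (auto simp: infdist_nonneg)
        with N show "hs n x = 1" by (auto simp: hs_def)
      qed
      then show ?thesis using True by (simp add: tendsto_eventually)
    next
      case f: False
      then have "infdist x (- U) = 0" by simp
      then show ?thesis using f by (simp add: hs_def)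
    qed
  qed
qed

lemma baire_set:
  assumes "A \<in> sets borel"
  shows "baire (indicator A :: 'a::metric_space \<Rightarrow> real)"
proof -
  have A: "A \<in> sigma_sets UNIV {S. open S}" using assms by (simp add: sets_borel)
  have ist: "Int_stable {S::'a set. open S}" by (auto simp: Int_stable_def)
  have cl: "{S::'a set. open S} \<subseteq> Pow UNIV" by auto
  show ?thesis
  proof (rule sigma_sets_induct_disjoint[OF ist cl A])
    fix A :: "'a set" assume "A \<in> {S. open S}" then show "baire (indicator A :: 'a \<Rightarrow> real)" by (auto intro: baire_open)
  next
    show "baire (indicator {} :: 'a \<Rightarrow> real)" by (auto intro!: baire.cont)
  next
    fix A :: "'a set" assume compl: "A \<in> sigma_sets UNIV {S. open S}" "baire (indicator A :: 'a \<Rightarrow> real)"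
    have "baire (\<lambda>x. (- indicator A x :: real) + 1)"
      by (rule baire_add_cont[OF baire_uminus[OF compl(2)]]) auto
    moreover have "(\<lambda>x. (- indicator A x :: real) + 1) = indicator (UNIV - A)"
      by (auto simp: indicator_def)
    ultimately show "baire (indicator (UNIV - A) :: 'a \<Rightarrow> real)" by simp
  next
    fix A :: "nat \<Rightarrow> 'a set" assume union: "disjoint_family A" "range A \<subseteq> sigma_sets UNIV {S. open S}" "\<And>i. baire (indicator (A i) :: 'a \<Rightarrow> real)"
    have dj: "disjoint_family_on A {..<n}" for n
      using disjoint_family_on_mono[OF subset_UNIV union(1)] .
    have eq: "(\<Sum>i<n. indicator (A i) x :: real) = indicator (\<Union>i<n. A i) x" for n x
      by (rule indicator_UN_disjoint[symmetric, OF finite_lessThan dj])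
    show "baire (indicator (\<Union>i. A i) :: 'a \<Rightarrow> real)"
    proof (rule baire.lim[where hs="\<lambda>n x. \<Sum>i<n. indicator (A i) x" and M=1])
      fix n show "baire (\<lambda>x. \<Sum>i<n. indicator (A i) x :: real)"
        by (rule baire_sum[of "{..<n}" "\<lambda>i. indicator (A i)", OF finite_lessThan union(3)])
    next
      fix n x
      show "\<bar>\<Sum>i<n. indicator (A i) x :: real\<bar> \<le> 1" unfolding eq abs_indicator by (rule indicator_le_1)
    next
      fix x
      show "(\<lambda>n. \<Sum>i<n. indicator (A i) x :: real) \<longlonglongrightarrow> indicator (\<Union>i. A i) x"
      proof (cases "x \<in> (\<Union>i. A i)")
        case True
        then obtain i where i: "x \<in> A i" by auto
        have "eventually (\<lambda>n. (\<Sum>i<n. indicator (A i) x :: real) = 1) sequentially"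
        proof (rule eventually_sequentiallyI[of "Suc i"])
          fix n assume "Suc i \<le> n"
          then have "x \<in> (\<Union>i<n. A i)" using i by auto
          then show "(\<Sum>i<n. indicator (A i) x :: real) = 1" unfolding eq by simp
        qed
        then show ?thesis using True by (simp add: tendsto_eventually)
      next
        case False
        then have "x \<notin> (\<Union>i<n. A i)" for n by auto
        then show ?thesis unfolding eq using False by simp
      qed
    qed
  qed
qed

lemma baire_borel:
  fixes h :: "'a::metric_space \<Rightarrow> real"
  assumes hm: "h \<in> borel_measurable borel" and hb: "\<And>x. \<bar>h x\<bar> \<le> B"
  shows "baire h"
proof (rule baire.lim[where hs="\<lambda>n x. real_of_int \<lfloor>real (Suc n) * h x\<rfloor> / real (Suc n)" and M="B + 1"])
  fix n
  define m where "m = real (Suc n)"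
  have m: "m \<ge> 1" by (simp add: m_def)
  define K where "K = {-\<lceil>m * B\<rceil> - 1 .. \<lceil>m * B\<rceil>}"
  have fin: "finite K" by (simp add: K_def)
  have inK: "\<lfloor>m * h x\<rfloor> \<in> K" for x
  proof -
    have "\<bar>m * h x\<bar> \<le> m * B" using hb[of x] m by (simp add: abs_mult mult_left_mono)
    then show ?thesis unfolding K_def by (auto simp: abs_le_iff) (linarith+)
  qed
  have eq: "(\<lambda>x. real_of_int \<lfloor>m * h x\<rfloor> / m) =
      (\<lambda>x. \<Sum>k\<in>K. (real_of_int k / m) * indicator {y. \<lfloor>m * h y\<rfloor> = k} x)"
  proof
    fix x
    have "(\<Sum>k\<in>K. (real_of_int k / m) * indicator {y. \<lfloor>m * h y\<rfloor> = k} x)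
        = (\<Sum>k\<in>K. if k = \<lfloor>m * h x\<rfloor> then real_of_int k / m else 0)"
      by (intro sum.cong) (auto simp: indicator_def)
    also have "\<dots> = real_of_int \<lfloor>m * h x\<rfloor> / m" using inK[of x] fin by (simp add: sum.delta')
    finally show "real_of_int \<lfloor>m * h x\<rfloor> / m = (\<Sum>k\<in>K. (real_of_int k / m) * indicator {y. \<lfloor>m * h y\<rfloor> = k} x)" by simp
  qed
  have "baire (\<lambda>x. \<Sum>k\<in>K. (real_of_int k / m) * indicator {y. \<lfloor>m * h y\<rfloor> = k} x)"
  proof (rule baire_sum[OF fin])
    fix k assume "k \<in> K"
    have "{y. \<lfloor>m * h y\<rfloor> = k} \<in> sets borel"
    proof -
      note hm[measurable]
      show ?thesis by measurable
    qed
    then show "baire (\<lambda>x. (real_of_int k / m) * indicator {y. \<lfloor>m * h y\<rfloor> = k} x)"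
      by (rule baire_scale[OF baire_set])
  qed
  then show "baire (\<lambda>x. real_of_int \<lfloor>real (Suc n) * h x\<rfloor> / real (Suc n))"
    using eq by (simp add: m_def)
next
  fix n x
  define m where "m = real (Suc n)"
  have m: "m \<ge> 1" by (simp add: m_def)
  have a: "m * h x - 1 < real_of_int \<lfloor>m * h x\<rfloor>" "real_of_int \<lfloor>m * h x\<rfloor> \<le> m * h x" by linarith+
  have "h x - 1 \<le> real_of_int \<lfloor>m * h x\<rfloor> / m" using a m by (simp add: field_simps)
  moreover have "real_of_int \<lfloor>m * h x\<rfloor> / m \<le> h x" using a m by (simp add: field_simps)
  ultimately show "\<bar>real_of_int \<lfloor>real (Suc n) * h x\<rfloor> / real (Suc n)\<bar> \<le> B + 1"
    using hb[of x] unfolding m_def[symmetric] by (auto simp: abs_le_iff)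
next
  fix x
  have b: "\<bar>real_of_int \<lfloor>real (Suc n) * h x\<rfloor> / real (Suc n) - h x\<bar> \<le> 1 / real (Suc n)" for n
  proof -
    define m where "m = real (Suc n)"
    have m: "m \<ge> 1" by (simp add: m_def)
    have a: "m * h x - 1 < real_of_int \<lfloor>m * h x\<rfloor>" "real_of_int \<lfloor>m * h x\<rfloor> \<le> m * h x" by linarith+
    have "(m * h x - 1) / m \<le> real_of_int \<lfloor>m * h x\<rfloor> / m"
      by (rule divide_right_mono) (use a m in auto)
    moreover have "(m * h x - 1) / m = h x - 1/m" using m by (simp add: diff_divide_distrib)
    ultimately have "h x - 1/m \<le> real_of_int \<lfloor>m * h x\<rfloor> / m" by simp
    moreover have "real_of_int \<lfloor>m * h x\<rfloor> / m \<le> h x" using a m by (simp add: field_simps)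
    ultimately show ?thesis unfolding m_def[symmetric] by (auto simp: abs_le_iff)
  qed
  have gl: "(\<lambda>n. 1 / real (Suc n)) \<longlonglongrightarrow> 0" by (rule LIMSEQ_Suc[OF lim_const_over_n])
  have "(\<lambda>n. real_of_int \<lfloor>real (Suc n) * h x\<rfloor> / real (Suc n) - h x) \<longlonglongrightarrow> 0"
    by (rule Lim_null_comparison[OF _ gl]) (intro always_eventually allI, simp only: real_norm_def b)
  from tendsto_add[OF this tendsto_const[of "h x"]]
  show "(\<lambda>n. real_of_int \<lfloor>real (Suc n) * h x\<rfloor> / real (Suc n)) \<longlonglongrightarrow> h x"
    by simp
qed

lemma baire_class:
  fixes C :: "('a::metric_space \<Rightarrow> real) \<Rightarrow> bool"
  assumes cont: "\<And>h. continuous_on UNIV h \<Longrightarrow> bounded (range h) \<Longrightarrow> C h"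
    and lim: "\<And>hs h M. (\<And>n. C (hs n)) \<Longrightarrow> (\<And>n. hs n \<in> borel_measurable borel) \<Longrightarrow>
        h \<in> borel_measurable borel \<Longrightarrow>
        (\<And>n x. \<bar>hs n x\<bar> \<le> M) \<Longrightarrow> (\<And>x. (\<lambda>n. hs n x) \<longlonglongrightarrow> h x) \<Longrightarrow> C h"
    and hm: "h \<in> borel_measurable borel" and hb: "\<And>x. \<bar>h x\<bar> \<le> B"
  shows "C h"
proof -
  have "baire h" by (rule baire_borel[OF hm hb])
  then show ?thesis
  proof (induction rule: baire.induct)
    case (cont h) then show ?case by (rule assms(1))
  next
    case (lim hs M h)
    show ?case
      by (rule assms(2)[OF lim(4) baire_meas[OF lim(1)] baire_meas[OF baire.lim[OF lim(1,2,3)]] lim(2,3)])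
  qed
qed





definition kern :: "'i set \<Rightarrow> ('i \<Rightarrow> 'a) \<Rightarrow> ('i \<Rightarrow> 'a \<Rightarrow> real) \<Rightarrow> 'a \<Rightarrow> 'a::euclidean_space measure" where
  "kern U p c x = distr (point_measure U (\<lambda>z. ennreal (c z x))) borel p"

lemma kern_meas_p: "p \<in> measurable (point_measure U w) borel"
  by simp

lemma sets_kern[simp, measurable_cong]: "sets (kern U p c x) = sets borel"
  by (simp add: kern_def)

lemma space_kern[simp]: "space (kern U p c x) = UNIV"
  by (simp add: kern_def)

lemma emeasure_kern:
  assumes "finite U" "A \<in> sets borel"
  shows "emeasure (kern U p c x) A = (\<Sum>z\<in>{z\<in>U. p z \<in> A}. ennreal (c z x))"
proof -
  have "emeasure (kern U p c x) A = emeasure (point_measure U (\<lambda>z. ennreal (c z x))) (p -` A \<inter> U)"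
    unfolding kern_def using assms by (subst emeasure_distr) (auto simp: space_point_measure)
  also have "p -` A \<inter> U = {z\<in>U. p z \<in> A}" by auto
  also have "emeasure (point_measure U (\<lambda>z. ennreal (c z x))) {z\<in>U. p z \<in> A} = (\<Sum>z\<in>{z\<in>U. p z \<in> A}. ennreal (c z x))"
    using assms by (intro emeasure_point_measure_finite) auto
  finally show ?thesis .
qed

lemma nn_integral_kern:
  assumes "finite U" "h \<in> borel_measurable borel"
  shows "(\<integral>\<^sup>+ y. h y \<partial>kern U p c x) = (\<Sum>z\<in>U. ennreal (c z x) * h (p z))"
  unfolding kern_def using assms
  by (subst nn_integral_distr) (auto simp: nn_integral_point_measure_finite)

lemma integral_kern:
  fixes f :: "'a::euclidean_space \<Rightarrow> real"
  assumes "finite U" "f \<in> borel_measurable borel" "\<And>z. z \<in> U \<Longrightarrow> c z x \<ge> 0"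
  shows "integral\<^sup>L (kern U p c x) f = (\<Sum>z\<in>U. c z x * f (p z))"
  unfolding kern_def using assms
  by (subst integral_distr) (auto simp: lebesgue_integral_point_measure_finite)

lemma kern_null:
  assumes "finite U" "\<And>z. z \<in> U \<Longrightarrow> c z x = 0"
  shows "kern U p c x = null_measure borel"
  by (rule measure_eqI) (auto simp: emeasure_kern assms)

lemma radon0_kern:
  fixes p :: "'i \<Rightarrow> 'a::euclidean_space"
  assumes "finite U" "\<And>z. z \<in> U \<Longrightarrow> p z \<noteq> 0"
  shows "radon0 (kern U p c x)"
  unfolding radon0_def
proof (intro conjI allI impI)
  show "sets (kern U p c x) = sets borel" by simp
  show "emeasure (kern U p c x) {0} = 0" using assms by (auto simp: emeasure_kern)
next
  fix K :: "'a set" assume "compact K \<and> K \<subseteq> - {0}"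
  then have "K \<in> sets borel" by (simp add: borel_compact)
  then show "emeasure (kern U p c x) K < \<infinity>" using assms
    by (simp add: emeasure_kern)
qed

lemma kern_tail_zero:
  fixes p :: "'i \<Rightarrow> 'a::euclidean_space"
  assumes U: "finite U" and R: "(\<Sum>z\<in>U. norm (p z)) \<le> R"
  shows "emeasure (kern U p c x) {y. norm y > R} = 0"
proof -
  have "{y::'a. norm y > R} \<in> sets borel" by measurable
  moreover have e: "{z\<in>U. p z \<in> {y. norm y > R}} = {}"
  proof -
    have "norm (p z) \<le> R" if "z \<in> U" for z
      using member_le_sum[of z U "\<lambda>z. norm (p z)", OF that _ U] R by auto
    then show ?thesis by force
  qed
  ultimately show ?thesis by (subst emeasure_kern[OF U]) (simp_all only: e sum.empty)
qed

lemma tendsto_eventually_zero_ennreal: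
  fixes F :: "real \<Rightarrow> ennreal"
  assumes "\<And>R. Rz \<le> R \<Longrightarrow> F R = 0"
  shows "(F \<longlongrightarrow> 0) at_top"
proof (rule tendsto_eventually)
  show "eventually (\<lambda>R. F R = 0) at_top" using assms by (auto simp: eventually_at_top_linorder)
qed

lemma SUP_zero_ennreal[simp]: "(SUP x\<in>K. (0::ennreal)) = 0"
  by (cases "K = {}") (auto simp: bot_ennreal)

lemma Cc0_meas: "Cc0 f \<Longrightarrow> f \<in> borel_measurable borel"
  by (auto simp: Cc0_def intro: borel_measurable_continuous_onI)

lemma kern_Kg:
  fixes g :: "'a::euclidean_space \<Rightarrow> real" and p :: "'i \<Rightarrow> 'a"
  assumes U: "finite U" and p: "\<And>z. z\<in>U \<Longrightarrow> p z \<noteq> 0"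
   and gm: "g \<in> borel_measurable borel"
   and cm: "\<And>z. z \<in> U \<Longrightarrow> c z \<in> borel_measurable borel"
   and cn: "\<And>z x. z \<in> U \<Longrightarrow> c z x \<ge> 0"
   and sup: "(SUP x. \<Sum>z\<in>U. ennreal (c z x) * ennreal (g (p z))) < \<infinity>"
  shows "kern U p c \<in> Kg g"
  unfolding Kg_def
proof (intro CollectI conjI allI impI)
  fix x show "radon0 (kern U p c x)" by (rule radon0_kern[OF U p])
next
  fix f :: "'a \<Rightarrow> real" assume "Cc0 f"
  then have fm: "f \<in> borel_measurable borel" by (rule Cc0_meas)
  have "(\<lambda>x. integral\<^sup>L (kern U p c x) f) = (\<lambda>x. \<Sum>z\<in>U. c z x * f (p z))"
    using integral_kern[OF U fm] cn by auto
  moreover have "(\<lambda>x. \<Sum>z\<in>U. c z x * f (p z)) \<in> borel_measurable borel"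
    by (rule borel_measurable_sum) (use cm in simp)
  ultimately show "(\<lambda>x. integral\<^sup>L (kern U p c x) f) \<in> borel_measurable borel" by simp
next
  have "(\<integral>\<^sup>+ y. ennreal (g y) \<partial>kern U p c x) = (\<Sum>z\<in>U. ennreal (c z x) * ennreal (g (p z)))" for x
    by (rule nn_integral_kern[OF U]) (use gm in measurable)
  then show "(SUP x. \<integral>\<^sup>+ y. ennreal (g y) \<partial>kern U p c x) < \<infinity>" using sup by simp
next
  fix K :: "'a set" assume "compact K"
  show "((\<lambda>R. SUP x\<in>K. emeasure (kern U p c x) {y. norm y > R}) \<longlongrightarrow> 0) at_top"
    by (rule tendsto_eventually_zero_ennreal[where Rz="\<Sum>z\<in>U. norm (p z)"])
       (simp add: kern_tail_zero[OF U])
qed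

lemma kern_bp:
  fixes g :: "'a::euclidean_space \<Rightarrow> real" and p :: "'i \<Rightarrow> 'a"
  assumes U: "finite U" and p: "\<And>z. z\<in>U \<Longrightarrow> p z \<noteq> 0"
   and gm: "g \<in> borel_measurable borel"
   and csm: "\<And>n z. z \<in> U \<Longrightarrow> cs n z \<in> borel_measurable borel"
   and csn: "\<And>n z x. z \<in> U \<Longrightarrow> cs n z x \<ge> 0"
   and cn: "\<And>z x. z \<in> U \<Longrightarrow> c z x \<ge> 0"
   and conv: "\<And>z x. z \<in> U \<Longrightarrow> (\<lambda>n. cs n z x) \<longlonglongrightarrow> c z x"
   and sup: "(SUP n. SUP x. \<Sum>z\<in>U. ennreal (cs n z x) * ennreal (g (p z))) < \<infinity>"
  shows "bp_conv g (\<lambda>n. kern U p (cs n)) (kern U p c)"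
  unfolding bp_conv_def
proof (intro conjI allI impI)
  have nn: "(\<integral>\<^sup>+ y. ennreal (g y) \<partial>kern U p c' x) = (\<Sum>z\<in>U. ennreal (c' z x) * ennreal (g (p z)))" for c' x
    by (rule nn_integral_kern[OF U]) (use gm in measurable)
  fix n
  have "(SUP x. \<Sum>z\<in>U. ennreal (cs n z x) * ennreal (g (p z))) \<le> (SUP n. SUP x. \<Sum>z\<in>U. ennreal (cs n z x) * ennreal (g (p z)))"
    by (rule SUP_upper) auto
  then have "(SUP x. \<Sum>z\<in>U. ennreal (cs n z x) * ennreal (g (p z))) < \<infinity>"
    using sup by (rule order.strict_trans1)
  then show "kern U p (cs n) \<in> Kg g"
    by (intro kern_Kg[OF U p gm]) (auto intro: csm csn)
next
  fix x show "radon0 (kern U p c x)" by (rule radon0_kern[OF U p])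
next
  have nn: "(\<integral>\<^sup>+ y. ennreal (g y) \<partial>kern U p c' x) = (\<Sum>z\<in>U. ennreal (c' z x) * ennreal (g (p z)))" for c' x
    by (rule nn_integral_kern[OF U]) (use gm in measurable)
  show "(SUP n. SUP x. \<integral>\<^sup>+ y. ennreal (g y) \<partial>kern U p (cs n) x) < \<infinity>"
    unfolding nn using sup .
next
  fix x
  show "vague_conv (\<lambda>n. kern U p (cs n) x) (kern U p c x)"
    unfolding vague_conv_def
  proof (intro allI impI)
    fix f :: "'a \<Rightarrow> real" assume "Cc0 f"
    then have fm: "f \<in> borel_measurable borel" by (rule Cc0_meas)
    have e1: "integral\<^sup>L (kern U p (cs n) x) f = (\<Sum>z\<in>U. cs n z x * f (p z))" for n
      by (rule integral_kern[OF U fm csn])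
    have e2: "integral\<^sup>L (kern U p c x) f = (\<Sum>z\<in>U. c z x * f (p z))"
      by (rule integral_kern[OF U fm cn])
    show "(\<lambda>n. integral\<^sup>L (kern U p (cs n) x) f) \<longlonglongrightarrow> integral\<^sup>L (kern U p c x) f"
      unfolding e1 e2 by (intro tendsto_sum tendsto_mult conv tendsto_const)
  qed
next
  fix K :: "'a set" assume "compact K"
  show "((\<lambda>R. SUP n. SUP x\<in>K. emeasure (kern U p (cs n) x) {y. norm y > R}) \<longlongrightarrow> 0) at_top"
    by (rule tendsto_eventually_zero_ennreal[where Rz="\<Sum>z\<in>U. norm (p z)"])
       (simp add: kern_tail_zero[OF U])
qed




definition goodS :: "('a::euclidean_space \<Rightarrow> real) \<Rightarrow> ('a \<Rightarrow> 'a measure) set \<Rightarrow> bool" where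
  "goodS g S \<longleftrightarrow> S \<subseteq> Kg g \<and> Cc_kernels \<inter> Kg g \<subseteq> S \<and> bp_closed g S"

lemma goodS_lim:
  assumes "goodS g S" "\<And>n. \<mu>s n \<in> S" "bp_conv g \<mu>s \<mu>" "\<mu> \<in> Kg g"
  shows "\<mu> \<in> S"
  using assms unfolding goodS_def bp_closed_def by blast

lemma sup_bound2:
  fixes g :: "'a \<Rightarrow> real"
  assumes U: "finite U" and b: "\<And>n z x. z \<in> U \<Longrightarrow> 0 \<le> cs n z x \<and> cs n z x \<le> B"
  shows "(SUP n. SUP x. \<Sum>z\<in>U. ennreal (cs n z x) * ennreal (g (p z))) < \<infinity>"
proof -
  have "(SUP n. SUP x. \<Sum>z\<in>U. ennreal (cs n z x) * ennreal (g (p z))) \<le> (\<Sum>z\<in>U. ennreal B * ennreal (g (p z)))"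
  proof (intro SUP_least sum_mono mult_right_mono)
    fix n x z assume "z \<in> U"
    then show "ennreal (cs n z x) \<le> ennreal B" using b by (auto intro: ennreal_leI)
  qed auto
  also have "\<dots> < \<infinity>" using U by (simp add: ennreal_mult_less_top)
  finally show ?thesis .
qed

lemma sup_bound1:
  fixes g :: "'a \<Rightarrow> real"
  assumes U: "finite U" and b: "\<And>z x. z \<in> U \<Longrightarrow> 0 \<le> c z x \<and> c z x \<le> B"
  shows "(SUP x. \<Sum>z\<in>U. ennreal (c z x) * ennreal (g (p z))) < \<infinity>"
  using sup_bound2[of U "\<lambda>n. c" B g p] assms by simp

definition cutoff :: "nat \<Rightarrow> 'a::real_normed_vector \<Rightarrow> real" where
  "cutoff n x = max 0 (min 1 (real n + 1 - norm x))"

lemma cutoff_cont: "continuous_on UNIV (cutoff n)"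
  unfolding cutoff_def by (intro continuous_intros)

lemma cutoff_bounds: "0 \<le> cutoff n x" "cutoff n x \<le> 1"
  unfolding cutoff_def by auto

lemma cutoff_one: "norm x \<le> real n \<Longrightarrow> cutoff n x = 1"
  unfolding cutoff_def by auto

lemma cutoff_zero: "x \<notin> cball 0 (real n + 1) \<Longrightarrow> cutoff n x = 0"
  unfolding cutoff_def by auto

lemma cutoff_lim: "(\<lambda>n. cutoff n x * a) \<longlonglongrightarrow> a"
proof (rule tendsto_eventually)
  show "eventually (\<lambda>n. cutoff n x * a = a) sequentially"
  proof (rule eventually_sequentiallyI[of "nat \<lceil>norm x\<rceil>"])
    fix n assume "nat \<lceil>norm x\<rceil> \<le> n"
    then have "norm x \<le> real n" by linarith
    then show "cutoff n x * a = a" by (simp add: cutoff_one)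
  qed
qed

lemma S_cont:
  fixes g :: "'a::euclidean_space \<Rightarrow> real" and p :: "'i \<Rightarrow> 'a"
  assumes S: "goodS g S" and U: "finite U" and p: "\<And>z. z\<in>U \<Longrightarrow> p z \<noteq> 0"
   and gm: "g \<in> borel_measurable borel"
   and cc: "\<And>z. z\<in>U \<Longrightarrow> continuous_on UNIV (c z)"
   and cb: "\<And>z x. z\<in>U \<Longrightarrow> 0 \<le> c z x \<and> c z x \<le> B"
  shows "kern U p c \<in> S"
proof -
  define cs where "cs n z x = cutoff n x * c z x" for n z x
  have cm: "c z \<in> borel_measurable borel" if "z \<in> U" for z
    using cc[OF that] by (rule borel_measurable_continuous_onI)
  have csm: "cs n z \<in> borel_measurable borel" if "z \<in> U" for n z
    unfolding cs_def using cm[OF that] borel_measurable_continuous_onI[OF cutoff_cont] by measurable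
  have csb: "0 \<le> cs n z x \<and> cs n z x \<le> B" if "z \<in> U" for n z x
  proof -
    have "cutoff n x * c z x \<le> 1 * c z x"
      by (rule mult_right_mono) (use cb[OF that] cutoff_bounds in auto)
    moreover have "0 \<le> cutoff n x * c z x" using cb[OF that, of x] cutoff_bounds[of n x] by simp
    ultimately show ?thesis unfolding cs_def using cb[OF that, of x] by linarith
  qed
  have inS: "kern U p (cs n) \<in> S" for n
  proof -
    have "kern U p (cs n) \<in> Kg g"
      by (rule kern_Kg[OF U p gm csm]) (use csb sup_bound1[OF U csb] in auto)
    moreover have "kern U p (cs n) \<in> Cc_kernels"
      unfolding Cc_kernels_def
    proof (intro CollectI conjI allI impI)
      fix x show "radon0 (kern U p (cs n) x)" by (rule radon0_kern[OF U p])
    next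
      fix f :: "'a \<Rightarrow> real" assume "Cc0 f"
      then have fm: "f \<in> borel_measurable borel" by (rule Cc0_meas)
      have eq: "(\<lambda>x. integral\<^sup>L (kern U p (cs n) x) f) = (\<lambda>x. \<Sum>z\<in>U. cs n z x * f (p z))"
        using integral_kern[OF U fm] csb by auto
      show "continuous_on UNIV (\<lambda>x. integral\<^sup>L (kern U p (cs n) x) f)"
        unfolding eq cs_def by (intro continuous_intros cutoff_cont cc)
    next
      show "\<exists>K. compact K \<and> (\<forall>x. x \<notin> K \<longrightarrow> kern U p (cs n) x = null_measure borel)"
        by (intro exI[of _ "cball 0 (real n + 1)"] conjI allI impI compact_cball kern_null[OF U])
           (simp add: cs_def cutoff_zero)
    qed
    ultimately show ?thesis using S unfolding goodS_def by blast
  qed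
  have "bp_conv g (\<lambda>n. kern U p (cs n)) (kern U p c)"
    by (rule kern_bp[OF U p gm csm]) (use csb cb sup_bound2[OF U csb] in \<open>auto simp: cs_def cutoff_lim\<close>)
  moreover have "kern U p c \<in> Kg g"
    by (rule kern_Kg[OF U p gm cm]) (use cb sup_bound1[OF U cb] in auto)
  ultimately show ?thesis by (rule goodS_lim[OF S inS])
qed

lemma S_borel_aux:
  fixes g :: "'a::euclidean_space \<Rightarrow> real" and p :: "'i \<Rightarrow> 'a"
  assumes S: "goodS g S" and U: "finite U" and p: "\<And>z. z\<in>U \<Longrightarrow> p z \<noteq> 0"
   and gm: "g \<in> borel_measurable borel"
  shows "finite T \<Longrightarrow> T \<subseteq> U \<Longrightarrow> \<forall>c. (\<exists>B. \<forall>z\<in>U. \<forall>x. 0 \<le> c z x \<and> c z x \<le> B) \<and>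
     (\<forall>z\<in>T. c z \<in> borel_measurable borel) \<and> (\<forall>z\<in>U-T. continuous_on UNIV (c z)) \<longrightarrow> kern U p c \<in> S"
proof (induction T rule: finite_induct)
  case empty
  show ?case
  proof (intro allI impI)
    fix c :: "'i \<Rightarrow> 'a \<Rightarrow> real"
    assume a: "(\<exists>B. \<forall>z\<in>U. \<forall>x. 0 \<le> c z x \<and> c z x \<le> B) \<and> (\<forall>z\<in>{}. c z \<in> borel_measurable borel) \<and> (\<forall>z\<in>U-{}. continuous_on UNIV (c z))"
    then obtain B where B: "\<forall>z\<in>U. \<forall>x. 0 \<le> c z x \<and> c z x \<le> B" by blast
    show "kern U p c \<in> S"
      by (rule S_cont[OF S U p gm, where c=c and B=B]) (use a B in auto)
  qed
next
  case (insert a T)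
  have aU: "a \<in> U" and TU: "T \<subseteq> U" using insert.prems by auto
  show ?case
  proof (intro allI impI)
    fix c :: "'i \<Rightarrow> 'a \<Rightarrow> real"
    assume asm: "(\<exists>B. \<forall>z\<in>U. \<forall>x. 0 \<le> c z x \<and> c z x \<le> B) \<and> (\<forall>z\<in>insert a T. c z \<in> borel_measurable borel) \<and> (\<forall>z\<in>U-insert a T. continuous_on UNIV (c z))"
    then obtain B where B: "\<forall>z\<in>U. \<forall>x. 0 \<le> c z x \<and> c z x \<le> B" by blast
    have cmT: "\<And>z. z \<in> insert a T \<Longrightarrow> c z \<in> borel_measurable borel" using asm by blast
    have ccT: "\<And>z. z \<in> U - insert a T \<Longrightarrow> continuous_on UNIV (c z)" using asm by blast
    have cmU: "c z \<in> borel_measurable borel" if "z \<in> U" for z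
      using cmT[of z] ccT[of z] that borel_measurable_continuous_onI by blast
    define upd where "upd h = c(a := (\<lambda>x. max 0 (h x)))" for h :: "'a \<Rightarrow> real"
    define C where "C h \<longleftrightarrow> kern U p (upd h) \<in> S" for h
    have updm: "upd h z \<in> borel_measurable borel" if "z \<in> U" "h \<in> borel_measurable borel" for z h
      using that cmU[of z] unfolding upd_def by (cases "z = a") auto
    have updb: "0 \<le> upd h z x \<and> upd h z x \<le> max B M" if "z \<in> U" "\<And>x. \<bar>h x\<bar> \<le> M" for z h x M
    proof (cases "z = a")
      case True then show ?thesis using that(2)[of x] by (auto simp: upd_def abs_le_iff max_def)
    next
      case False
      have "0 \<le> c z x \<and> c z x \<le> B" using that(1) B by blast
      then show ?thesis using False by (auto simp: upd_def max_def)
    qed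
    have "C (c a)"
    proof (rule baire_class[where C=C])
      fix h :: "'a \<Rightarrow> real" assume hc: "continuous_on UNIV h" and hb: "bounded (range h)"
      then obtain M where M: "\<And>x. \<bar>h x\<bar> \<le> M" by (auto simp: bounded_range_iff)
      have "kern U p (upd h) \<in> S"
      proof (rule insert.IH[OF TU, rule_format], intro conjI)
        show "\<exists>B. \<forall>z\<in>U. \<forall>x. 0 \<le> upd h z x \<and> upd h z x \<le> B"
          using updb[where h=h and M=M, OF _ M] by blast
        show "\<forall>z\<in>T. upd h z \<in> borel_measurable borel"
          using cmT insert.hyps(2) unfolding upd_def by auto
        show "\<forall>z\<in>U - T. continuous_on UNIV (upd h z)"
          using ccT hc unfolding upd_def by (auto intro!: continuous_intros)
      qed
      then show "C h" by (simp add: C_def)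
    next
      fix hs :: "nat \<Rightarrow> 'a \<Rightarrow> real" and h M
      assume hsC: "\<And>n. C (hs n)" and hsm: "\<And>n. hs n \<in> borel_measurable borel"
        and hm: "h \<in> borel_measurable borel" and hsb: "\<And>n x. \<bar>hs n x\<bar> \<le> M"
        and conv: "\<And>x. (\<lambda>n. hs n x) \<longlonglongrightarrow> h x"
      have hb: "\<bar>h x\<bar> \<le> M" for x
        by (rule tendsto_le[OF _ tendsto_const tendsto_rabs[OF conv]]) (use hsb in auto)
      have "bp_conv g (\<lambda>n. kern U p (upd (hs n))) (kern U p (upd h))"
      proof (rule kern_bp[OF U p gm])
        show "\<And>n z. z \<in> U \<Longrightarrow> upd (hs n) z \<in> borel_measurable borel" using updm hsm by blast
        show "\<And>n z x. z \<in> U \<Longrightarrow> 0 \<le> upd (hs n) z x" using updb[where h="hs n" and M=M for n, OF _ hsb] by blast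
        show "\<And>z x. z \<in> U \<Longrightarrow> 0 \<le> upd h z x" using updb[where h=h and M=M, OF _ hb] by blast
        show "\<And>z x. z \<in> U \<Longrightarrow> (\<lambda>n. upd (hs n) z x) \<longlonglongrightarrow> upd h z x"
          unfolding upd_def by (auto intro!: tendsto_intros conv)
        show "(SUP n. SUP x. \<Sum>z\<in>U. ennreal (upd (hs n) z x) * ennreal (g (p z))) < \<infinity>"
          by (rule sup_bound2[OF U]) (use updb[where h="hs n" and M=M for n, OF _ hsb] in blast)
      qed
      moreover have "kern U p (upd h) \<in> Kg g"
      proof (rule kern_Kg[OF U p gm])
        show "\<And>z. z \<in> U \<Longrightarrow> upd h z \<in> borel_measurable borel" using updm hm by blast
        show "\<And>z x. z \<in> U \<Longrightarrow> 0 \<le> upd h z x" using updb[where h=h and M=M, OF _ hb] by blast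
        show "(SUP x. \<Sum>z\<in>U. ennreal (upd h z x) * ennreal (g (p z))) < \<infinity>"
          by (rule sup_bound1[OF U]) (use updb[where h=h and M=M, OF _ hb] in blast)
      qed
      moreover have inS: "kern U p (upd (hs n)) \<in> S" for n using hsC by (simp add: C_def)
      ultimately show "C h" unfolding C_def by (intro goodS_lim[OF S inS])
    next
      show "c a \<in> borel_measurable borel" using cmT by simp
    next
      fix x show "\<bar>c a x\<bar> \<le> B" using B aU by auto
    qed
    moreover have "upd (c a) = c"
      using B aU unfolding upd_def by (auto simp: fun_eq_iff)
    ultimately show "kern U p c \<in> S" by (simp add: C_def)
  qed
qed

lemma S_borel:
  fixes g :: "'a::euclidean_space \<Rightarrow> real" and p :: "'i \<Rightarrow> 'a"
  assumes S: "goodS g S" and U: "finite U" and p: "\<And>z. z\<in>U \<Longrightarrow> p z \<noteq> 0"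
   and gm: "g \<in> borel_measurable borel"
   and cm: "\<And>z. z \<in> U \<Longrightarrow> c z \<in> borel_measurable borel"
   and cb: "\<And>z x. z\<in>U \<Longrightarrow> 0 \<le> c z x \<and> c z x \<le> B"
  shows "kern U p c \<in> S"
proof -
  have "\<forall>c. (\<exists>B. \<forall>z\<in>U. \<forall>x. 0 \<le> c z x \<and> c z x \<le> B) \<and>
     (\<forall>z\<in>U. c z \<in> borel_measurable borel) \<and> (\<forall>z\<in>U-U. continuous_on UNIV (c z)) \<longrightarrow> kern U p c \<in> S"
    by (rule S_borel_aux[where p=p and U=U and T=U, OF S U p gm U subset_refl])
  then show ?thesis using cm cb by blast
qed

lemma S_unbdd:
  fixes g :: "'a::euclidean_space \<Rightarrow> real" and p :: "'i \<Rightarrow> 'a"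
  assumes S: "goodS g S" and U: "finite U" and p: "\<And>z. z\<in>U \<Longrightarrow> p z \<noteq> 0"
   and gm: "g \<in> borel_measurable borel"
   and cm: "\<And>z. z \<in> U \<Longrightarrow> c z \<in> borel_measurable borel"
   and cn: "\<And>z x. z\<in>U \<Longrightarrow> 0 \<le> c z x"
   and sup: "(SUP x. \<Sum>z\<in>U. ennreal (c z x) * ennreal (g (p z))) < \<infinity>"
  shows "kern U p c \<in> S"
proof -
  define cs where "cs m z x = min (c z x) (real m)" for m z x
  have csm: "cs m z \<in> borel_measurable borel" if "z \<in> U" for m z
    unfolding cs_def using cm[OF that] by measurable
  have csb: "0 \<le> cs m z x \<and> cs m z x \<le> real m" if "z \<in> U" for m z x
    using cn[OF that] unfolding cs_def by auto
  have inS: "kern U p (cs m) \<in> S" for m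
    by (rule S_borel[OF S U p gm csm csb])
  have "bp_conv g (\<lambda>m. kern U p (cs m)) (kern U p c)"
  proof (rule kern_bp[OF U p gm csm])
    show "\<And>n z x. z \<in> U \<Longrightarrow> 0 \<le> cs n z x" using csb by blast
    show "\<And>z x. z \<in> U \<Longrightarrow> 0 \<le> c z x" by (rule cn)
    show "\<And>z x. z \<in> U \<Longrightarrow> (\<lambda>n. cs n z x) \<longlonglongrightarrow> c z x"
    proof -
      fix z x
      show "(\<lambda>n. cs n z x) \<longlonglongrightarrow> c z x"
      proof (rule tendsto_eventually)
        show "eventually (\<lambda>n. cs n z x = c z x) sequentially"
        proof (rule eventually_sequentiallyI[of "nat \<lceil>c z x\<rceil>"])
          fix n assume "nat \<lceil>c z x\<rceil> \<le> n"
          then have "c z x \<le> real n" by linarith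
          then show "cs n z x = c z x" by (simp add: cs_def)
        qed
      qed
    qed
    have "(SUP n. SUP x. \<Sum>z\<in>U. ennreal (cs n z x) * ennreal (g (p z))) \<le> (SUP x. \<Sum>z\<in>U. ennreal (c z x) * ennreal (g (p z)))"
    proof (intro SUP_least SUP_upper2[OF UNIV_I] sum_mono mult_right_mono)
      fix n x z show "ennreal (cs n z x) \<le> ennreal (c z x)" by (intro ennreal_leI) (simp add: cs_def)
    qed auto
    then show "(SUP n. SUP x. \<Sum>z\<in>U. ennreal (cs n z x) * ennreal (g (p z))) < \<infinity>"
      using sup by (rule order.strict_trans1)
  qed
  moreover have "kern U p c \<in> Kg g" by (rule kern_Kg[OF U p gm cm cn sup])
  ultimately show ?thesis by (rule goodS_lim[OF S inS])
qed




lemma pou: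
  fixes K :: "'a::euclidean_space set"
  assumes K: "compact K" and r: "r > 0"
  obtains U :: "'a set" and \<psi> :: "'a \<Rightarrow> 'a \<Rightarrow> real"
  where "finite U" "U \<subseteq> K" "\<And>z. continuous_on UNIV (\<psi> z)" "\<And>z y. 0 \<le> \<psi> z y"
    "\<And>z y. \<psi> z y \<noteq> 0 \<Longrightarrow> dist y z < r" "\<And>y. (\<Sum>z\<in>U. \<psi> z y) \<le> 1"
    "\<And>y. y \<in> K \<Longrightarrow> (\<Sum>z\<in>U. \<psi> z y) = 1"
proof -
  obtain U where UK: "U \<subseteq> K" and U: "finite U" and cov: "K \<subseteq> (\<Union>z\<in>U. ball z r)"
    using compactE_image[OF K, of K "\<lambda>z. ball z r"] r by force
  define \<phi> :: "'a \<Rightarrow> 'a \<Rightarrow> real" where "\<phi> z y = max 0 (r - dist y z)" for z y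
  define \<Phi> where "\<Phi> y = (\<Sum>z\<in>U. \<phi> z y)" for y
  have \<phi>c: "continuous_on UNIV (\<phi> z)" for z unfolding \<phi>_def by (intro continuous_intros)
  have \<Phi>c: "continuous_on UNIV \<Phi>" unfolding \<Phi>_def by (intro continuous_intros \<phi>c)
  have \<phi>n: "0 \<le> \<phi> z y" for z y unfolding \<phi>_def by simp
  have \<Phi>n: "0 \<le> \<Phi> y" for y unfolding \<Phi>_def by (intro sum_nonneg \<phi>n)
  have \<Phi>pos: "\<Phi> y > 0" if yK: "y \<in> K" for y
  proof -
    obtain z where z: "z \<in> U" "y \<in> ball z r" using cov yK by blast
    then have "\<phi> z y > 0" unfolding \<phi>_def by (simp add: dist_commute)
    moreover have "\<phi> z y \<le> \<Phi> y" unfolding \<Phi>_def using z(1) U \<phi>n by (intro member_le_sum) auto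
    ultimately show ?thesis by simp
  qed
  obtain \<delta> where \<delta>: "\<delta> > 0" "\<And>y. y \<in> K \<Longrightarrow> \<delta> \<le> \<Phi> y"
  proof (cases "K = {}")
    case True then show ?thesis using that[of 1] by auto
  next
    case False
    obtain y0 where "y0 \<in> K" "\<forall>y\<in>K. \<Phi> y0 \<le> \<Phi> y"
      using continuous_attains_inf[OF K False continuous_on_subset[OF \<Phi>c]] by auto
    then show ?thesis using that[of "\<Phi> y0"] \<Phi>pos by auto
  qed
  define \<psi> :: "'a \<Rightarrow> 'a \<Rightarrow> real" where "\<psi> z y = \<phi> z y / max \<delta> (\<Phi> y)" for z y
  show ?thesis
  proof (rule that[of U \<psi>])
    show "finite U" "U \<subseteq> K" by fact+
    show "continuous_on UNIV (\<psi> z)" for z unfolding \<psi>_def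
      by (intro continuous_intros \<phi>c \<Phi>c) (use \<delta> in auto)
    show "0 \<le> \<psi> z y" for z y unfolding \<psi>_def using \<phi>n \<delta> by simp
    show "dist y z < r" if "\<psi> z y \<noteq> 0" for z y
      using that unfolding \<psi>_def \<phi>_def by (auto split: if_splits simp: max_def)
    have sum_eq: "(\<Sum>z\<in>U. \<psi> z y) = \<Phi> y / max \<delta> (\<Phi> y)" for y
      unfolding \<psi>_def \<Phi>_def by (simp add: sum_divide_distrib)
    show "(\<Sum>z\<in>U. \<psi> z y) \<le> 1" for y
      unfolding sum_eq using \<delta>(1) \<Phi>n[of y] by (simp add: divide_le_eq_1 max_def)
    show "(\<Sum>z\<in>U. \<psi> z y) = 1" if "y \<in> K" for y
      unfolding sum_eq using \<delta>(2)[OF that] \<Phi>pos[OF that] by (simp add: max_def)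
  qed
qed

lemma Cc0_integrable:
  fixes f :: "'a::euclidean_space \<Rightarrow> real"
  assumes M: "radon0 M" and f: "Cc0 f"
  shows "integrable M f"
proof -
  obtain K where K: "compact K" "K \<subseteq> - {0}" "\<And>y. y \<notin> K \<Longrightarrow> f y = 0" and fc: "continuous_on UNIV f"
    using f unfolding Cc0_def by blast
  have sM: "sets M = sets borel" using M by (simp add: radon0_def)
  have fin: "emeasure M K < \<infinity>" using M K unfolding radon0_def by blast
  obtain B where B: "\<And>y. y \<in> K \<Longrightarrow> \<bar>f y\<bar> \<le> B"
    using compact_imp_bounded[OF compact_continuous_image[OF continuous_on_subset[OF fc] K(1)]]
    unfolding bounded_real by (auto simp: subset_UNIV)
  have KM: "K \<in> sets M" unfolding sM using K(1) by (simp add: borel_compact)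
  have fm: "f \<in> borel_measurable M"
    using borel_measurable_continuous_onI[OF fc] measurable_cong_sets[OF sM refl] by blast
  show ?thesis
  proof (rule Bochner_Integration.integrable_bound)
    show "integrable M (\<lambda>y. B * indicator K y)"
      using KM fin by (intro integrable_mult_right integrable_real_indicator) auto
    show "f \<in> borel_measurable M" by fact
    show "AE y in M. norm (f y) \<le> norm (B * indicator K y)"
    proof (rule AE_I2)
      fix y show "norm (f y) \<le> norm (B * indicator K y)"
      proof (cases "y \<in> K")
        case True then show ?thesis using B[OF True] by auto
      next
        case False then show ?thesis using K(3) by auto
      qed
    qed
  qed
qed




lemma vague_part:
  fixes M :: "'a::euclidean_space measure" and f :: "'a \<Rightarrow> real"
    and U :: "nat \<Rightarrow> 'a set" and \<psi> :: "nat \<Rightarrow> 'a \<Rightarrow> 'a \<Rightarrow> real" and pt :: "nat \<Rightarrow> 'a \<Rightarrow> 'a"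
  assumes M: "radon0 M" and f: "Cc0 f"
    and U: "\<And>n. finite (U n)"
    and \<psi>C: "\<And>n z. z \<in> U n \<Longrightarrow> Cc0 (\<psi> n z)"
    and \<psi>n: "\<And>n z y. 0 \<le> \<psi> n z y"
    and \<psi>s: "\<And>n z y. \<psi> n z y \<noteq> 0 \<Longrightarrow> dist y z < 1 / (2 * (real n + 1))"
    and \<psi>1: "\<And>n y. (\<Sum>z\<in>U n. \<psi> n z y) \<le> 1"
    and \<psi>K: "\<And>n y. 1 / (real n + 1) \<le> norm y \<Longrightarrow> norm y \<le> real n + 1 \<Longrightarrow> (\<Sum>z\<in>U n. \<psi> n z y) = 1"
    and pt: "\<And>n z. z \<in> U n \<Longrightarrow> dist (pt n z) z \<le> 1 / (2 * (real n + 1))"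
  shows "(\<lambda>n. \<Sum>z\<in>U n. integral\<^sup>L M (\<psi> n z) * f (pt n z)) \<longlonglongrightarrow> integral\<^sup>L M f"
proof -
  obtain Kf where Kf: "compact Kf" "Kf \<subseteq> - {0}" "\<And>y. y \<notin> Kf \<Longrightarrow> f y = 0" and fc: "continuous_on UNIV f"
    using f unfolding Cc0_def by blast
  obtain a where a: "a > 0" "\<And>y. y \<in> Kf \<Longrightarrow> a \<le> norm y"
  proof (cases "Kf = {}")
    case True then show ?thesis using that[of 1] by auto
  next
    case False
    obtain y0 where "y0 \<in> Kf" "\<forall>y\<in>Kf. norm y0 \<le> norm y"
      using continuous_attains_inf[OF Kf(1) False, of norm] by (auto intro: continuous_intros)
    moreover have "y0 \<noteq> 0" using \<open>y0 \<in> Kf\<close> Kf(2) by auto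
    ultimately show ?thesis using that[of "norm y0"] by auto
  qed
  obtain Rb where Rb: "\<And>y. y \<in> Kf \<Longrightarrow> norm y \<le> Rb"
    using compact_imp_bounded[OF Kf(1)] unfolding bounded_iff by blast
  define L where "L = {y::'a. a/2 \<le> norm y \<and> norm y \<le> Rb + 1}"
  have Lc: "compact L"
  proof -
    have "closed L" unfolding L_def by (intro closed_Collect_conj closed_Collect_le continuous_intros)
    moreover have "bounded L" unfolding L_def bounded_iff by auto
    ultimately show ?thesis by (simp add: compact_eq_bounded_closed)
  qed
  have L0: "L \<subseteq> - {0}" unfolding L_def using a by auto
  have sM: "sets M = sets borel" using M by (simp add: radon0_def)
  have LM: "L \<in> sets M" unfolding sM using Lc by (simp add: borel_compact)
  have Lfin: "emeasure M L < \<infinity>" using M Lc L0 unfolding radon0_def by blast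
  have uc: "uniformly_continuous_on L f"
    by (rule compact_uniformly_continuous[OF continuous_on_subset[OF fc] Lc]) simp
  have fint: "integrable M f" by (rule Cc0_integrable[OF M f])
  have \<psi>int: "integrable M (\<psi> n z)" if "z \<in> U n" for n z by (rule Cc0_integrable[OF M \<psi>C[OF that]])
  show ?thesis
  proof (rule LIMSEQ_I)
    fix e :: real assume e: "e > 0"
    define mL where "mL = measure M L"
    have mL: "mL \<ge> 0" unfolding mL_def by simp
    define eps where "eps = e / (2 * (mL + 1))"
    have eps: "eps > 0" unfolding eps_def using e mL by auto
    obtain \<delta> where \<delta>: "\<delta> > 0" "\<And>y y'. y \<in> L \<Longrightarrow> y' \<in> L \<Longrightarrow> dist y' y < \<delta> \<Longrightarrow> dist (f y') (f y) < eps"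
      using uc eps unfolding uniformly_continuous_on_def by metis
    define N where "N = nat \<lceil>max (max (1/\<delta>) (2/a)) Rb\<rceil>"
    have Nprop: "1 / (real n + 1) < \<delta> \<and> 1 / (real n + 1) < a / 2 \<and> Rb < real n + 1 \<and> 1 / (real n + 1) \<le> 1 \<and> 1 / (real n + 1) < a"
      if "N \<le> n" for n
    proof -
      have "max (max (1/\<delta>) (2/a)) Rb \<le> real n" using that unfolding N_def by linarith
      then have h: "1/\<delta> < real n + 1" "2/a < real n + 1" "Rb < real n + 1" by auto
      have "1 / (real n + 1) < \<delta>" using h(1) \<delta>(1) by (simp add: field_simps)
      moreover have "1 / (real n + 1) < a / 2" using h(2) a(1) by (simp add: field_simps)
      moreover have "1 / (real n + 1) \<le> 1" by (simp add: field_simps)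
      ultimately show ?thesis using h(3) a(1) by auto
    qed
    show "\<exists>N. \<forall>n\<ge>N. norm ((\<Sum>z\<in>U n. integral\<^sup>L M (\<psi> n z) * f (pt n z)) - integral\<^sup>L M f) < e"
    proof (intro exI allI impI)
      fix n assume "N \<le> n"
      note Np = Nprop[OF this]
      define rr where "rr = 1 / (2 * (real n + 1))"
      have rr2: "2 * rr = 1 / (real n + 1)" unfolding rr_def by (simp add: field_simps)
      have pw: "\<bar>f y - (\<Sum>z\<in>U n. f (pt n z) * \<psi> n z y)\<bar> \<le> eps * indicator L y" for y
      proof -
        have fy: "f y = (\<Sum>z\<in>U n. f y * \<psi> n z y)"
        proof (cases "f y = 0")
          case True then show ?thesis by simp
        next
          case False
          then have "y \<in> Kf" using Kf(3) by blast
          then have "1 / (real n + 1) \<le> norm y" "norm y \<le> real n + 1"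
            using a(2)[of y] Rb[of y] Np by auto
          then have "(\<Sum>z\<in>U n. \<psi> n z y) = 1" by (rule \<psi>K)
          then show ?thesis by (simp add: sum_distrib_left[symmetric])
        qed
        have tb: "\<bar>f y - f (pt n z)\<bar> * \<psi> n z y \<le> eps * indicator L y * \<psi> n z y" if z: "z \<in> U n" for z
        proof (cases "\<psi> n z y = 0 \<or> f y = f (pt n z)")
          case True then show ?thesis using \<psi>n[of n z y] eps by (auto simp: indicator_def)
        next
          case False
          then have d1: "dist y z < rr" using \<psi>s[of n z y] unfolding rr_def by auto
          have d2: "dist (pt n z) z \<le> rr" using pt[OF z] unfolding rr_def by auto
          have dd: "dist y (pt n z) < 2 * rr" using d1 d2 dist_triangle[of y "pt n z" z] by (simp add: dist_commute)
          have "y \<in> Kf \<or> pt n z \<in> Kf" using False Kf(3) by metis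
          have inL: "y \<in> L \<and> pt n z \<in> L"
          proof -
            have nd: "\<bar>norm y - norm (pt n z)\<bar> < 2 * rr"
              using dd norm_triangle_ineq3[of y "pt n z"] by (simp add: dist_norm)
            have "2 * rr < a / 2" "2 * rr \<le> 1" using Np rr2 by auto
            then show ?thesis using \<open>y \<in> Kf \<or> pt n z \<in> Kf\<close> a(2) Rb nd a(1) unfolding L_def by force
          qed
          have "dist y (pt n z) < \<delta>" using dd rr2 Np by auto
          then have "dist (f y) (f (pt n z)) < eps" using \<delta>(2)[of "pt n z" y] inL by (simp add: dist_commute)
          then have "\<bar>f y - f (pt n z)\<bar> \<le> eps" by (simp add: dist_real_def)
          then show ?thesis using inL \<psi>n[of n z y] by (simp add: mult_right_mono)
        qed
        have "f y - (\<Sum>z\<in>U n. f (pt n z) * \<psi> n z y) = (\<Sum>z\<in>U n. (f y - f (pt n z)) * \<psi> n z y)"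
          by (subst fy) (simp add: sum_subtractf[symmetric] algebra_simps)
        also have "\<bar>\<dots>\<bar> \<le> (\<Sum>z\<in>U n. \<bar>(f y - f (pt n z)) * \<psi> n z y\<bar>)" by (rule sum_abs)
        also have "\<dots> = (\<Sum>z\<in>U n. \<bar>f y - f (pt n z)\<bar> * \<psi> n z y)"
          using \<psi>n by (simp add: abs_mult)
        also have "\<dots> \<le> (\<Sum>z\<in>U n. eps * indicator L y * \<psi> n z y)" by (rule sum_mono) (rule tb)
        also have "\<dots> = eps * indicator L y * (\<Sum>z\<in>U n. \<psi> n z y)" by (simp add: sum_distrib_left)
        also have "\<dots> \<le> eps * indicator L y * 1"
          by (rule mult_left_mono[OF \<psi>1]) (use eps in simp)
        finally show ?thesis by simp
      qed
      have sint: "integrable M (\<lambda>y. \<Sum>z\<in>U n. f (pt n z) * \<psi> n z y)"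
        by (rule Bochner_Integration.integrable_sum[where I="U n" and M=M and f="\<lambda>z y. f (pt n z) * \<psi> n z y"], rule integrable_mult_right, erule \<psi>int)
      have eq: "(\<Sum>z\<in>U n. integral\<^sup>L M (\<psi> n z) * f (pt n z)) = integral\<^sup>L M (\<lambda>y. \<Sum>z\<in>U n. f (pt n z) * \<psi> n z y)"
        by (subst Bochner_Integration.integral_sum) (auto intro!: integrable_mult_right \<psi>int simp: mult.commute)
      have "\<bar>integral\<^sup>L M f - integral\<^sup>L M (\<lambda>y. \<Sum>z\<in>U n. f (pt n z) * \<psi> n z y)\<bar>
          = \<bar>integral\<^sup>L M (\<lambda>y. f y - (\<Sum>z\<in>U n. f (pt n z) * \<psi> n z y))\<bar>"
        by (subst Bochner_Integration.integral_diff[OF fint sint]) simp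
      also have "\<dots> \<le> integral\<^sup>L M (\<lambda>y. \<bar>f y - (\<Sum>z\<in>U n. f (pt n z) * \<psi> n z y)\<bar>)"
        by (rule integral_abs_bound)
      also have "\<dots> \<le> integral\<^sup>L M (\<lambda>y. eps * indicator L y)"
        by (rule Bochner_Integration.integral_mono) (use pw LM Lfin fint sint in \<open>auto intro!: integrable_mult_right\<close>)
      also have "\<dots> = eps * mL" unfolding mL_def using LM Lfin by simp
      also have "\<dots> < e"
      proof -
        have "eps * mL = e * mL / (2 * (mL + 1))" unfolding eps_def by simp
        also have "\<dots> < e" using e mL by (simp add: field_simps add_nonneg_pos)
        finally show ?thesis .
      qed
      finally show "norm ((\<Sum>z\<in>U n. integral\<^sup>L M (\<psi> n z) * f (pt n z)) - integral\<^sup>L M f) < e"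
        unfolding eq by (simp add: abs_minus_commute)
    qed
  qed
qed




lemma Cc0_cont_meas:
  assumes "radon0 M" "Cc0 f"
  shows "f \<in> borel_measurable M"
proof -
  have "sets M = sets borel" using assms by (simp add: radon0_def)
  then show ?thesis using Cc0_meas[OF assms(2)] measurable_cong_sets by blast
qed

lemma ennreal_integral_Cc0:
  assumes M: "radon0 M" and f: "Cc0 f" and fn: "\<And>y. 0 \<le> f y"
  shows "ennreal (integral\<^sup>L M f) = (\<integral>\<^sup>+ y. ennreal (f y) \<partial>M)"
  by (rule nn_integral_eq_integral[symmetric]) (use Cc0_integrable[OF M f] fn in auto)

lemma gbound:
  fixes M :: "'a::euclidean_space measure" and g :: "'a \<Rightarrow> real"
  assumes M: "radon0 M" and gm: "g \<in> borel_measurable borel" and U: "finite U"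
    and \<psi>C: "\<And>z. z \<in> U \<Longrightarrow> Cc0 (\<psi> z)" and \<psi>n: "\<And>z y. 0 \<le> \<psi> z y"
    and \<psi>1: "\<And>y. (\<Sum>z\<in>U. \<psi> z y) \<le> 1"
    and gp: "\<And>z y. z \<in> U \<Longrightarrow> \<psi> z y \<noteq> 0 \<Longrightarrow> g (pt z) \<le> g y"
  shows "(\<Sum>z\<in>U. ennreal (integral\<^sup>L M (\<psi> z)) * ennreal (g (pt z))) \<le> (\<integral>\<^sup>+ y. ennreal (g y) \<partial>M)"
proof -
  have sM: "sets M = sets borel" using M by (simp add: radon0_def)
  have gmM: "g \<in> borel_measurable M" using gm measurable_cong_sets[OF sM refl] by blast
  have \<psi>m: "\<psi> z \<in> borel_measurable M" if "z \<in> U" for z by (rule Cc0_cont_meas[OF M \<psi>C[OF that]])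
  have "(\<Sum>z\<in>U. ennreal (integral\<^sup>L M (\<psi> z)) * ennreal (g (pt z)))
      = (\<Sum>z\<in>U. \<integral>\<^sup>+ y. ennreal (\<psi> z y) * ennreal (g (pt z)) \<partial>M)"
  proof (rule sum.cong[OF refl])
    fix z assume z: "z \<in> U"
    show "ennreal (integral\<^sup>L M (\<psi> z)) * ennreal (g (pt z)) = (\<integral>\<^sup>+ y. ennreal (\<psi> z y) * ennreal (g (pt z)) \<partial>M)"
      by (subst nn_integral_multc) (use \<psi>m[OF z] ennreal_integral_Cc0[OF M \<psi>C[OF z] \<psi>n] in auto)
  qed
  also have "\<dots> \<le> (\<Sum>z\<in>U. \<integral>\<^sup>+ y. ennreal (\<psi> z y) * ennreal (g y) \<partial>M)"
  proof (rule sum_mono, rule nn_integral_mono)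
    fix z y assume z: "z \<in> U"
    show "ennreal (\<psi> z y) * ennreal (g (pt z)) \<le> ennreal (\<psi> z y) * ennreal (g y)"
    proof (cases "\<psi> z y = 0")
      case True then show ?thesis by simp
    next
      case False then show ?thesis using gp[OF z False] by (intro mult_left_mono ennreal_leI) auto
    qed
  qed
  also have "\<dots> = (\<integral>\<^sup>+ y. (\<Sum>z\<in>U. ennreal (\<psi> z y) * ennreal (g y)) \<partial>M)"
    by (rule nn_integral_sum[symmetric]) (use \<psi>m gmM in measurable)
  also have "\<dots> \<le> (\<integral>\<^sup>+ y. ennreal (g y) \<partial>M)"
  proof (rule nn_integral_mono)
    fix y
    have "(\<Sum>z\<in>U. ennreal (\<psi> z y) * ennreal (g y)) = ennreal (\<Sum>z\<in>U. \<psi> z y) * ennreal (g y)"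
      by (simp add: sum_distrib_right[symmetric] \<psi>n)
    also have "\<dots> \<le> 1 * ennreal (g y)" by (intro mult_right_mono) (use \<psi>1[of y] in auto)
    finally show "(\<Sum>z\<in>U. ennreal (\<psi> z y) * ennreal (g y)) \<le> ennreal (g y)" by simp
  qed
  finally show ?thesis .
qed

lemma tailbound:
  fixes M :: "'a::euclidean_space measure"
  assumes M: "radon0 M" and U: "finite U"
    and \<psi>C: "\<And>z. z \<in> U \<Longrightarrow> Cc0 (\<psi> z)" and \<psi>n: "\<And>z y. 0 \<le> \<psi> z y"
    and \<psi>1: "\<And>y. (\<Sum>z\<in>U. \<psi> z y) \<le> 1"
    and \<psi>s: "\<And>z y. \<psi> z y \<noteq> 0 \<Longrightarrow> dist y z < rr"
    and pt: "\<And>z. z \<in> U \<Longrightarrow> dist (pt z) z \<le> rr" and rr: "2 * rr \<le> 1"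
  shows "(\<Sum>z\<in>{z\<in>U. pt z \<in> {y. norm y > R}}. ennreal (integral\<^sup>L M (\<psi> z))) \<le> emeasure M {y. norm y > R - 1}"
proof -
  define U' where "U' = {z\<in>U. pt z \<in> {y. norm y > R}}"
  have U'U: "U' \<subseteq> U" and U': "finite U'" using U unfolding U'_def by auto
  have sM: "sets M = sets borel" using M by (simp add: radon0_def)
  have \<psi>m: "\<psi> z \<in> borel_measurable M" if "z \<in> U" for z by (rule Cc0_cont_meas[OF M \<psi>C[OF that]])
  have Am: "{y::'a. norm y > R - 1} \<in> sets M" unfolding sM by measurable
  have "(\<Sum>z\<in>U'. ennreal (integral\<^sup>L M (\<psi> z))) = (\<Sum>z\<in>U'. \<integral>\<^sup>+ y. ennreal (\<psi> z y) \<partial>M)"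
    by (rule sum.cong[OF refl]) (use U'U ennreal_integral_Cc0[OF M \<psi>C \<psi>n] in auto)
  also have "\<dots> = (\<integral>\<^sup>+ y. (\<Sum>z\<in>U'. ennreal (\<psi> z y)) \<partial>M)"
    by (rule nn_integral_sum[symmetric]) (use \<psi>m U'U in auto)
  also have "\<dots> \<le> (\<integral>\<^sup>+ y. indicator {y. norm y > R - 1} y \<partial>M)"
  proof (rule nn_integral_mono)
    fix y
    show "(\<Sum>z\<in>U'. ennreal (\<psi> z y)) \<le> indicator {y. norm y > R - 1} y"
    proof (cases "norm y > R - 1")
      case True
      have "(\<Sum>z\<in>U'. \<psi> z y) \<le> (\<Sum>z\<in>U. \<psi> z y)" by (rule sum_mono2[OF U U'U]) (use \<psi>n in auto)
      then have "(\<Sum>z\<in>U'. \<psi> z y) \<le> 1" using \<psi>1[of y] by simp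
      then show ?thesis using True \<psi>n by (simp add: sum_nonneg)
    next
      case False
      have "\<psi> z y = 0" if z: "z \<in> U'" for z
      proof (rule ccontr)
        assume "\<psi> z y \<noteq> 0"
        then have "dist y z < rr" by (rule \<psi>s)
        moreover have "dist (pt z) z \<le> rr" using pt z U'U by auto
        moreover have "norm (pt z) > R" using z unfolding U'_def by auto
        ultimately have "norm y > R - 1"
          using rr dist_triangle[of "pt z" y z] norm_triangle_ineq3[of "pt z" y]
          by (auto simp: dist_norm dist_commute norm_minus_commute)
        with False show False by simp
      qed
      then show ?thesis by simp
    qed
  qed
  also have "\<dots> = emeasure M {y. norm y > R - 1}" using Am by simp
  finally show ?thesis unfolding U'_def .
qed




lemma S_all:
  fixes g :: "'a::euclidean_space \<Rightarrow> real"
  assumes S: "goodS g S" and gc: "continuous_on (- {0}) g" and mu: "\<mu> \<in> Kg g"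
  shows "\<mu> \<in> S"
proof -
  have gm: "g \<in> borel_measurable borel"
    by (rule borel_measurable_continuous_countable_exceptions[of "{0}"]) (use gc in auto)
  have rad: "\<And>x. radon0 (\<mu> x)"
    and meas: "\<And>f. Cc0 f \<Longrightarrow> (\<lambda>x. integral\<^sup>L (\<mu> x) f) \<in> borel_measurable borel"
    and supg: "(SUP x. \<integral>\<^sup>+ y. ennreal (g y) \<partial>\<mu> x) < \<infinity>"
    and tail: "\<And>K. compact K \<Longrightarrow> ((\<lambda>R. SUP x\<in>K. emeasure (\<mu> x) {y. norm y > R}) \<longlongrightarrow> 0) at_top"
    using mu unfolding Kg_def by auto
  define Kn :: "nat \<Rightarrow> 'a set" where "Kn n = {y. 1/(real n+1) \<le> norm y \<and> norm y \<le> real n + 1}" for n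
  define r :: "nat \<Rightarrow> real" where "r n = 1/(2*(real n+1))" for n
  have rpos: "r n > 0" for n unfolding r_def by simp
  have r2: "2 * r n = 1/(real n+1)" for n unfolding r_def by (simp add: field_simps)
  have r1: "2 * r n \<le> 1" for n unfolding r2 by (simp add: field_simps)
  have Knc: "compact (Kn n)" for n
  proof -
    have "closed (Kn n)" unfolding Kn_def by (intro closed_Collect_conj closed_Collect_le continuous_intros)
    moreover have "bounded (Kn n)" unfolding Kn_def bounded_iff by auto
    ultimately show ?thesis by (simp add: compact_eq_bounded_closed)
  qed
  define P where "P n (U :: 'a set) (\<psi> :: 'a \<Rightarrow> 'a \<Rightarrow> real) \<longleftrightarrow> finite U \<and> U \<subseteq> Kn n \<and> (\<forall>z. continuous_on UNIV (\<psi> z)) \<and>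
      (\<forall>z y. 0 \<le> \<psi> z y) \<and> (\<forall>z y. \<psi> z y \<noteq> 0 \<longrightarrow> dist y z < r n) \<and> (\<forall>y. (\<Sum>z\<in>U. \<psi> z y) \<le> 1) \<and>
      (\<forall>y\<in>Kn n. (\<Sum>z\<in>U. \<psi> z y) = 1)" for n U \<psi>
  have "\<forall>n. \<exists>q. P n (fst q) (snd q)"
  proof
    fix n
    show "\<exists>q. P n (fst q) (snd q)"
    proof (rule pou[OF Knc[of n] rpos[of n]])
      fix U and \<psi> :: "'a \<Rightarrow> 'a \<Rightarrow> real" assume "finite U" "U \<subseteq> Kn n" "\<And>z. continuous_on UNIV (\<psi> z)" "\<And>z y. 0 \<le> \<psi> z y"
        "\<And>z y. \<psi> z y \<noteq> 0 \<Longrightarrow> dist y z < r n" "\<And>y. (\<Sum>z\<in>U. \<psi> z y) \<le> 1"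
        "\<And>y. y \<in> Kn n \<Longrightarrow> (\<Sum>z\<in>U. \<psi> z y) = 1"
      then have "P n U \<psi>" unfolding P_def by blast
      then show "\<exists>q. P n (fst q) (snd q)" by (intro exI[of _ "(U, \<psi>)"]) simp
    qed
  qed
  then obtain q where q: "\<And>n. P n (fst (q n)) (snd (q n))" by metis
  define U where "U n = fst (q n)" for n
  define \<psi> where "\<psi> n = snd (q n)" for n
  have Uf: "finite (U n)" and UK: "U n \<subseteq> Kn n" and \<psi>c: "continuous_on UNIV (\<psi> n z)"
    and \<psi>n: "0 \<le> \<psi> n z y" and \<psi>s: "\<psi> n z y \<noteq> 0 \<Longrightarrow> dist y z < r n"
    and \<psi>1: "(\<Sum>z\<in>U n. \<psi> n z y) \<le> 1" and \<psi>K: "y \<in> Kn n \<Longrightarrow> (\<Sum>z\<in>U n. \<psi> n z y) = 1" for n z y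
    using q[of n] unfolding P_def U_def \<psi>_def by auto
  have cb0: "cball z (r n) \<subseteq> - {0}" if z: "z \<in> U n" for n z
  proof
    fix y assume y: "y \<in> cball z (r n)"
    have "norm z \<ge> 2 * r n" using UK z unfolding Kn_def r2 by auto
    moreover have "norm z \<le> norm y + dist z y" by (metis dist_norm norm_triangle_sub)
    ultimately have "norm y > 0" using y rpos[of n] by auto
    then show "y \<in> - {0}" by auto
  qed
  define pt where "pt n z = (SOME y. y \<in> cball z (r n) \<and> (\<forall>w\<in>cball z (r n). g y \<le> g w))" for n z
  have ptP: "pt n z \<in> cball z (r n) \<and> (\<forall>w\<in>cball z (r n). g (pt n z) \<le> g w)" if z: "z \<in> U n" for n z
  proof -
    have "\<exists>y\<in>cball z (r n). \<forall>w\<in>cball z (r n). g y \<le> g w"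
      by (rule continuous_attains_inf[OF compact_cball]) (use rpos[of n] continuous_on_subset[OF gc cb0[OF z]] in auto)
    then have "\<exists>y. y \<in> cball z (r n) \<and> (\<forall>w\<in>cball z (r n). g y \<le> g w)" by blast
    then show ?thesis unfolding pt_def by (rule someI_ex)
  qed
  have pt0: "pt n z \<noteq> 0" if z: "z \<in> U n" for n z
    using ptP[OF z] cb0[OF z] by auto
  have ptd: "dist (pt n z) z \<le> r n" if z: "z \<in> U n" for n z
    using ptP[OF z] by (simp add: dist_commute)
  have \<psi>C: "Cc0 (\<psi> n z)" if z: "z \<in> U n" for n z
    unfolding Cc0_def
  proof (intro conjI exI[of _ "cball z (r n)"] allI impI)
    show "continuous_on UNIV (\<psi> n z)" by (rule \<psi>c)
    show "compact (cball z (r n))" by simp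
    show "cball z (r n) \<subseteq> - {0}" by (rule cb0[OF z])
    fix y assume "y \<notin> cball z (r n)"
    then show "\<psi> n z y = 0" using \<psi>s[of n z y] by (auto simp: dist_commute)
  qed
  define c where "c n z x = integral\<^sup>L (\<mu> x) (\<psi> n z)" for n z x
  have cm: "c n z \<in> borel_measurable borel" if z: "z \<in> U n" for n z
    unfolding c_def by (rule meas[OF \<psi>C[OF z]])
  have cn: "0 \<le> c n z x" for n z x
    unfolding c_def by (rule Bochner_Integration.integral_nonneg) (rule \<psi>n)
  have gb: "(\<Sum>z\<in>U n. ennreal (c n z x) * ennreal (g (pt n z))) \<le> (\<integral>\<^sup>+ y. ennreal (g y) \<partial>\<mu> x)" for n x
    unfolding c_def
  proof (rule gbound[OF rad gm Uf \<psi>C \<psi>n \<psi>1])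
    fix z y assume z: "z \<in> U n" and "\<psi> n z y \<noteq> 0"
    then have "y \<in> cball z (r n)" using \<psi>s[of n z y] by (auto simp: dist_commute)
    then show "g (pt n z) \<le> g y" using ptP[OF z] by blast
  qed
  have supc: "(SUP x. \<Sum>z\<in>U n. ennreal (c n z x) * ennreal (g (pt n z))) < \<infinity>" for n
  proof -
    have "(SUP x. \<Sum>z\<in>U n. ennreal (c n z x) * ennreal (g (pt n z))) \<le> (SUP x. \<integral>\<^sup>+ y. ennreal (g y) \<partial>\<mu> x)"
      by (intro SUP_mono) (use gb in blast)
    then show ?thesis using supg by (rule order.strict_trans1)
  qed
  have kS: "kern (U n) (pt n) (c n) \<in> S" for n
    by (rule S_unbdd[OF S Uf pt0 gm cm cn supc])
  have nnk: "(\<integral>\<^sup>+ y. ennreal (g y) \<partial>kern (U n) (pt n) (c n) x) = (\<Sum>z\<in>U n. ennreal (c n z x) * ennreal (g (pt n z)))" for n x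
    by (rule nn_integral_kern[OF Uf]) (use gm in measurable)
  have bp: "bp_conv g (\<lambda>n. kern (U n) (pt n) (c n)) \<mu>"
    unfolding bp_conv_def
  proof (intro conjI allI impI)
    fix n show "kern (U n) (pt n) (c n) \<in> Kg g" using kS[of n] S unfolding goodS_def by blast
  next
    fix x show "radon0 (\<mu> x)" by (rule rad)
  next
    have "(SUP n. SUP x. \<integral>\<^sup>+ y. ennreal (g y) \<partial>kern (U n) (pt n) (c n) x) \<le> (SUP x. \<integral>\<^sup>+ y. ennreal (g y) \<partial>\<mu> x)"
      unfolding nnk
    proof (intro SUP_least)
      fix n x show "(\<Sum>z\<in>U n. ennreal (c n z x) * ennreal (g (pt n z))) \<le> (SUP x. \<integral>\<^sup>+ y. ennreal (g y) \<partial>\<mu> x)"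
        by (rule SUP_upper2[where i=x and f="\<lambda>x. \<integral>\<^sup>+ y. ennreal (g y) \<partial>\<mu> x", OF UNIV_I gb[of n x]])
    qed
    then show "(SUP n. SUP x. \<integral>\<^sup>+ y. ennreal (g y) \<partial>kern (U n) (pt n) (c n) x) < \<infinity>"
      using supg by (rule order.strict_trans1)
  next
    fix x
    show "vague_conv (\<lambda>n. kern (U n) (pt n) (c n) x) (\<mu> x)"
      unfolding vague_conv_def
    proof (intro allI impI)
      fix f :: "'a \<Rightarrow> real" assume f: "Cc0 f"
      have eq: "integral\<^sup>L (kern (U n) (pt n) (c n) x) f = (\<Sum>z\<in>U n. integral\<^sup>L (\<mu> x) (\<psi> n z) * f (pt n z))" for n
        using integral_kern[OF Uf Cc0_meas[OF f] cn] unfolding c_def .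
      show "(\<lambda>n. integral\<^sup>L (kern (U n) (pt n) (c n) x) f) \<longlonglongrightarrow> integral\<^sup>L (\<mu> x) f"
        unfolding eq
      proof (rule vague_part[OF rad f Uf \<psi>C \<psi>n])
        show "\<And>n z y. \<psi> n z y \<noteq> 0 \<Longrightarrow> dist y z < 1 / (2 * (real n + 1))"
          using \<psi>s unfolding r_def by blast
        show "\<And>n y. (\<Sum>z\<in>U n. \<psi> n z y) \<le> 1" by (rule \<psi>1)
        show "\<And>n y. 1 / (real n + 1) \<le> norm y \<Longrightarrow> norm y \<le> real n + 1 \<Longrightarrow> (\<Sum>z\<in>U n. \<psi> n z y) = 1"
          using \<psi>K unfolding Kn_def by blast
        show "\<And>n z. z \<in> U n \<Longrightarrow> dist (pt n z) z \<le> 1 / (2 * (real n + 1))"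
          using ptd unfolding r_def by blast
      qed
    qed
  next
    fix K :: "'a set" assume K: "compact K"
    define F where "F R = (SUP x\<in>K. emeasure (\<mu> x) {y. norm y > R})" for R
    have le: "(SUP n. SUP x\<in>K. emeasure (kern (U n) (pt n) (c n) x) {y. norm y > R}) \<le> F (R - 1)" for R
      unfolding F_def
    proof (intro SUP_least)
      fix n x assume x: "x \<in> K"
      have Am: "{y::'a. norm y > R} \<in> sets borel" by measurable
      have "emeasure (kern (U n) (pt n) (c n) x) {y. norm y > R}
          = (\<Sum>z\<in>{z\<in>U n. pt n z \<in> {y. norm y > R}}. ennreal (integral\<^sup>L (\<mu> x) (\<psi> n z)))"
        unfolding c_def by (rule emeasure_kern[OF Uf Am])
      also have "\<dots> \<le> emeasure (\<mu> x) {y. norm y > R - 1}"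
        by (rule tailbound[OF rad Uf \<psi>C \<psi>n \<psi>1 \<psi>s ptd r1])
      also have "\<dots> \<le> (SUP x\<in>K. emeasure (\<mu> x) {y. norm y > R - 1})" by (rule SUP_upper[OF x])
      finally show "emeasure (kern (U n) (pt n) (c n) x) {y. norm y > R} \<le> (SUP x\<in>K. emeasure (\<mu> x) {y. norm y > R - 1})" .
    qed
    have Fl: "(F \<longlongrightarrow> 0) at_top" unfolding F_def by (rule tail[OF K])
    have sh: "filterlim (\<lambda>R::real. -1 + R) at_top at_top"
      by (rule filterlim_tendsto_add_at_top[OF tendsto_const filterlim_ident])
    have "((\<lambda>R. F (-1 + R)) \<longlongrightarrow> 0) at_top" by (rule filterlim_compose[OF Fl sh])
    then have Fl2: "((\<lambda>R. F (R - 1)) \<longlongrightarrow> 0) at_top" by (simp add: add.commute)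
    show "((\<lambda>R. SUP n. SUP x\<in>K. emeasure (kern (U n) (pt n) (c n) x) {y. norm y > R}) \<longlongrightarrow> 0) at_top"
      by (rule tendsto_sandwich[OF _ _ tendsto_const Fl2]) (use le in auto)
  qed
  show ?thesis by (rule goodS_lim[OF S kS bp mu])
qed



theorem theoremA5:
  fixes g :: "'a::euclidean_space \<Rightarrow> real"
  assumes "continuous_on (- {0}) g"
    and "\<And>y. y \<noteq> 0 \<Longrightarrow> g y \<ge> 0"
  shows "bp_closure g (Cc_kernels \<inter> Kg g) = Kg g"
proof
  show "bp_closure g (Cc_kernels \<inter> Kg g) \<subseteq> Kg g"
    unfolding bp_closure_def
    by (rule Inter_lower) (auto simp: bp_closed_def)
next
  show "Kg g \<subseteq> bp_closure g (Cc_kernels \<inter> Kg g)"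
  proof
    fix \<mu> assume mu: "\<mu> \<in> Kg g"
    show "\<mu> \<in> bp_closure g (Cc_kernels \<inter> Kg g)"
      unfolding bp_closure_def
    proof (rule InterI)
      fix S assume "S \<in> {S. S \<subseteq> Kg g \<and> Cc_kernels \<inter> Kg g \<subseteq> S \<and> bp_closed g S}"
      then have "goodS g S" unfolding goodS_def by blast
      then show "\<mu> \<in> S" by (rule S_all[OF _ assms(1) mu])
    qed
  qed
qed

end
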